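(* Let $C$ be the middle-thirds Cantor set. For every $K<\infty$ and $n\in\mathbb{N}$ let \[ S_n^{(K)}:=\{p/q\in C:\ \gcd(p,q)=1,\ 3^{n-1}\le q<3^n,\ P(p/q)\le K\log q\}. \] Then for every $\varepsilon_1>0$ we have $\#(S_n^{(K)})=O\big(2^{n(1+\varepsilon_1)}\big)$ as $n\to\infty$.
   Context: $C=\{x\in[0,1]: x=\sum_{i\ge1}a_i3^{-i}\text{ with all }a_i\in\{0,2\}\}$. For a rational number $p/q$, its period $P(p/q)$ is the (minimal) period of the eventually periodic part of its ternary expansion. $\log$ is the natural logarithm; $p\in\mathbb{Z}$, $q\in\mathbb{N}$. *)

theory Defs
  imports "HOL-Analysis.Analysis" "HOL-Library.Landau_Symbols"
begin

text \<open>Middle-thirds Cantor set: x = sum_{i>=1} a_i 3^{-i} with a_i in {0,2}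
  (here the digit a_{i+1} is indexed by i, starting from 0).\<close>
definition cantor_set :: "real set" where
  "cantor_set = {x. \<exists>a::nat \<Rightarrow> nat. (\<forall>i. a i \<in> {0, 2}) \<and>
                    x = (\<Sum>i. real (a i) / 3 ^ Suc i)}"

text \<open>The (i+1)-th ternary digit of x (standard greedy expansion).\<close>
definition ternary_digit :: "real \<Rightarrow> nat \<Rightarrow> nat" where
  "ternary_digit x i = nat (\<lfloor>3 ^ Suc i * x\<rfloor> mod 3)"

definition ternary_period :: "real \<Rightarrow> nat" where
  "ternary_period x = (LEAST k. k > 0 \<and>
      (\<exists>N. \<forall>i\<ge>N. ternary_digit x (i + k) = ternary_digit x i))"

text \<open>S_n^{(K)}, rationals p/q in lowest terms (represented by the unique pair (p,q)).\<close>
definition S_set :: "real \<Rightarrow> nat \<Rightarrow> (int \<times> nat) set" where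
  "S_set K n = {(p, q). coprime p (int q) \<and> 3 ^ (n - 1) \<le> q \<and> q < 3 ^ n \<and>
                  real_of_int p / real q \<in> cantor_set \<and>
                  real (ternary_period (real_of_int p / real q)) \<le> K * ln (real q)}"

end

theory Submission
  imports Defs "HOL-Computational_Algebra.Primes" "HOL-Real_Asymp.Real_Asymp"
begin


lemma card_divisors_le:
  fixes m :: nat assumes "m > 0"
  shows "card {d. d dvd m} \<le> (\<Prod>p\<in>prime_factors m. Suc (multiplicity p m))"
proof -
  let ?f = "\<lambda>d. restrict (\<lambda>p. multiplicity p d) (prime_factors m)"
  have "inj_on ?f {d. d dvd m}"
  proof (rule inj_onI)
    fix d1 d2 assume d1: "d1 \<in> {d. d dvd m}" and d2: "d2 \<in> {d. d dvd m}" and eq: "?f d1 = ?f d2"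
    have nz: "d1 \<noteq> 0" "d2 \<noteq> 0" using d1 d2 assms by auto
    have "multiplicity p d1 = multiplicity p d2" if "prime p" for p
    proof (cases "p \<in> prime_factors m")
      case True then show ?thesis using fun_cong[OF eq, of p] by simp
    next
      case False
      then have "\<not> p dvd m" using assms that by (auto simp: in_prime_factors_iff)
      then have "\<not> p dvd d1" "\<not> p dvd d2" using d1 d2 dvd_trans by blast+
      then show ?thesis by (simp add: not_dvd_imp_multiplicity_0)
    qed
    then have "normalize d1 = normalize d2" using multiplicity_eq_imp_eq nz by blast
    then show "d1 = d2" by simp
  qed
  moreover have "?f ` {d. d dvd m} \<subseteq> PiE (prime_factors m) (\<lambda>p. {0..multiplicity p m})"
    using dvd_imp_multiplicity_le[of _ m] assms by (auto simp: PiE_def)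
  moreover have "finite (PiE (prime_factors m) (\<lambda>p. {0..multiplicity p m}))"
    by (intro finite_PiE) auto
  ultimately have "card {d. d dvd m} \<le> card (PiE (prime_factors m) (\<lambda>p. {0..multiplicity p m}))"
    by (rule card_inj_on_le)
  also have "\<dots> = (\<Prod>p\<in>prime_factors m. Suc (multiplicity p m))"
    by (subst card_PiE) auto
  finally show ?thesis .
qed

lemma divisor_bound:
  fixes \<delta> :: real assumes "\<delta> > 0"
  shows "\<exists>C>0. \<forall>m::nat. m > 0 \<longrightarrow> real (card {d. d dvd m}) \<le> C * real m powr \<delta>"
proof -
  define c where "c = 1 + 1/(\<delta> * ln 2)"
  define B where "B = nat \<lceil>2 powr (1/\<delta>)\<rceil>"
  define h where "h = (\<lambda>p::nat. if 2 \<le> real p powr \<delta> then 1 else c)"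
  have c1: "c \<ge> 1" using assms by (simp add: c_def)
  have h1: "h p \<ge> 1" for p using c1 by (simp add: h_def)
  have pe: "(real p ^ e) powr \<delta> = (real p powr \<delta>) ^ e" if "p \<ge> 2" for p e :: nat
  proof -
    have "real p ^ e = real p powr real e" using that by (simp add: powr_realpow)
    then show ?thesis using that by (simp add: powr_powr powr_power mult.commute)
  qed
  have fac: "real (Suc e) \<le> h p * (real p ^ e) powr \<delta>" if "p \<ge> 2" for p e :: nat
  proof (cases "2 \<le> real p powr \<delta>")
    case True
    have "real (Suc e) \<le> 2 ^ e"
    proof -
      have "Suc e \<le> 2 ^ e" by (induction e) auto
      then show ?thesis by (metis of_nat_le_iff of_nat_numeral of_nat_power)
    qed
    also have "\<dots> \<le> (real p powr \<delta>) ^ e" by (rule power_mono[OF True]) simp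
    finally show ?thesis using True pe[OF that] by (simp add: h_def)
  next
    case False
    have "1 + real e * \<delta> * ln 2 \<le> exp (real e * \<delta> * ln 2)" by (rule exp_ge_add_one_self)
    also have "exp (real e * \<delta> * ln 2) = 2 powr (real e * \<delta>)" by (simp add: powr_def)
    also have "\<dots> = (2 powr \<delta>) ^ e" by (simp add: powr_power mult.commute)
    also have "\<dots> \<le> (real p powr \<delta>) ^ e"
      using that assms by (intro power_mono powr_mono2) auto
    finally have A: "1 + real e * \<delta> * ln 2 \<le> (real p ^ e) powr \<delta>" using pe[OF that] by simp
    have "real (Suc e) \<le> c * (1 + real e * \<delta> * ln 2)"
      using assms by (simp add: c_def field_simps)
    also have "\<dots> \<le> c * (real p ^ e) powr \<delta>" using A c1 by simp
    finally show ?thesis using False by (simp add: h_def)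
  qed
  have smallB: "p < B" if "\<not> 2 \<le> real p powr \<delta>" for p :: nat
  proof -
    have "real p = (real p powr \<delta>) powr (1/\<delta>)" using assms by (simp add: powr_powr)
    also have "\<dots> < 2 powr (1/\<delta>)" using that assms by (intro powr_less_mono2) auto
    also have "\<dots> \<le> real B" unfolding B_def by linarith
    finally show ?thesis by simp
  qed
  show ?thesis
  proof (intro exI[of _ "c ^ B"] conjI allI impI)
    show "c ^ B > 0" using c1 by simp
    fix m :: nat assume m: "m > 0"
    let ?P = "prime_factors m"
    have p2: "p \<ge> 2" if "p \<in> ?P" for p using that prime_ge_2_nat by (auto simp: in_prime_factors_iff)
    have "real (card {d. d dvd m}) \<le> real (\<Prod>p\<in>?P. Suc (multiplicity p m))"
      using card_divisors_le[OF m] by linarith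
    also have "\<dots> = (\<Prod>p\<in>?P. real (Suc (multiplicity p m)))" by simp
    also have "\<dots> \<le> (\<Prod>p\<in>?P. h p * (real p ^ multiplicity p m) powr \<delta>)"
      using fac p2 by (intro prod_mono) (auto simp del: of_nat_Suc)
    also have "\<dots> = (\<Prod>p\<in>?P. h p) * (\<Prod>p\<in>?P. real p ^ multiplicity p m) powr \<delta>"
      by (simp add: prod.distrib prod_powr_distrib)
    also have "(\<Prod>p\<in>?P. real p ^ multiplicity p m) = real m"
    proof -
      have "(\<Prod>p\<in>?P. p ^ multiplicity p m) = m" using prod_prime_factors[of m] m by simp
      then show ?thesis by (metis (no_types, lifting) of_nat_power of_nat_prod prod.cong)
    qed
    also have "(\<Prod>p\<in>?P. h p) \<le> c ^ B"
    proof -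
      have "(\<Prod>p\<in>?P. h p) = (\<Prod>p\<in>?P. if \<not> 2 \<le> real p powr \<delta> then c else 1)"
        by (intro prod.cong) (auto simp: h_def)
      also have "\<dots> = (\<Prod>p\<in>{p\<in>?P. \<not> 2 \<le> real p powr \<delta>}. c)"
        by (rule prod.inter_filter[symmetric]) simp
      also have "\<dots> = c ^ card {p\<in>?P. \<not> 2 \<le> real p powr \<delta>}" by simp
      also have "\<dots> \<le> c ^ B"
      proof (rule power_increasing[OF _ c1])
        have "{p\<in>?P. \<not> 2 \<le> real p powr \<delta>} \<subseteq> {..<B}" using smallB by auto
        then show "card {p\<in>?P. \<not> 2 \<le> real p powr \<delta>} \<le> B"
          by (metis card_lessThan card_mono finite_lessThan)
      qed
      finally show ?thesis .
    qed
    finally show "real (card {d. d dvd m}) \<le> c ^ B * real m powr \<delta>"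
      by (simp add: mult_right_mono)
  qed
qed



lemma floor3_bounds: "0 \<le> \<lfloor>3 * frac y\<rfloor> \<and> \<lfloor>3 * frac (y::real)\<rfloor> \<le> 2"
proof -
  have "0 \<le> frac y" "frac y < 1" by (auto simp: frac_lt_1)
  then show ?thesis by linarith
qed

lemma digit_frac: "ternary_digit x i = nat \<lfloor>3 * frac (3^i * x)\<rfloor>"
proof -
  have e: "3 ^ Suc i * x = 3 * frac (3^i * x) + of_int (3 * \<lfloor>3^i * x\<rfloor>)"
    by (simp add: frac_def algebra_simps)
  have "\<lfloor>3 ^ Suc i * x\<rfloor> = \<lfloor>3 * frac (3^i * x)\<rfloor> + 3 * \<lfloor>3^i * x\<rfloor>"
    unfolding e by (rule floor_add_int[symmetric])
  then have "\<lfloor>3 ^ Suc i * x\<rfloor> mod 3 = \<lfloor>3 * frac (3^i * x)\<rfloor>"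
    using floor3_bounds[of "3^i*x"] by simp
  then show ?thesis by (simp add: ternary_digit_def)
qed

lemma frac_Suc: "frac (3^Suc i * (x::real)) = frac (3 * frac (3^i * x))"
proof -
  have e: "3 ^ Suc i * x = 3 * frac (3^i * x) + of_int (3 * \<lfloor>3^i * x\<rfloor>)"
    by (simp add: frac_def algebra_simps)
  show ?thesis unfolding e by (rule frac_add_of_int_right)
qed

lemma digit_rel: "real (ternary_digit x i) = 3 * frac (3^i * x) - frac (3^Suc i * x)"
  unfolding digit_frac frac_Suc using floor3_bounds[of "3^i*x"] frac_def[of "3 * frac (3^i * x)"]
  by simp

lemma frac_shift:
  assumes "frac (3^i * x) = frac (3^j * x)"
  shows "frac (3^(i+k) * x) = frac (3^(j+k) * (x::real))"
proof (induction k)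
  case 0 then show ?case using assms by simp
next
  case (Suc k)
  have "frac (3^(i + Suc k) * x) = frac (3 * frac (3^(i+k) * x))"
    using frac_Suc[of "i+k" x] by (simp only: add_Suc_right)
  also have "\<dots> = frac (3 * frac (3^(j+k) * x))" using Suc by (simp only:)
  also have "\<dots> = frac (3^(j + Suc k) * x)"
    using frac_Suc[of "j+k" x] by (simp only: add_Suc_right)
  finally show ?case .
qed

lemma digit_shift:
  assumes "frac (3^i * x) = frac (3^j * x)"
  shows "ternary_digit x (i+k) = ternary_digit x (j+k)"
  using frac_shift[OF assms, of k] by (simp add: digit_frac)

lemma digits_eq_frac:
  assumes "\<forall>k. ternary_digit x (i+k) = ternary_digit x (j+k)"
  shows "frac (3^i * x) = frac (3^j * x)"
proof (rule ccontr)
  define D where "D = (\<lambda>k. frac (3^(i+k) * x) - frac (3^(j+k) * x))"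
  have DS: "D (Suc k) = 3 * D k" for k
  proof -
    have a: "frac (3^(i+Suc k)*x) = 3*frac(3^(i+k)*x) - real (ternary_digit x (i+k))"
      using digit_rel[of x "i+k"] by (simp only: add_Suc_right)
    have b: "frac (3^(j+Suc k)*x) = 3*frac(3^(j+k)*x) - real (ternary_digit x (j+k))"
      using digit_rel[of x "j+k"] by (simp only: add_Suc_right)
    have c: "ternary_digit x (i+k) = ternary_digit x (j+k)" using assms by blast
    show ?thesis unfolding D_def a b c by (simp add: algebra_simps)
  qed
  have Dk: "D k = 3^k * D 0" for k by (induction k) (simp_all add: DS)
  have Db: "\<bar>D k\<bar> < 1" for k
  proof -
    have "0 \<le> frac (3^(i+k) * x)" "frac (3^(i+k) * x) < 1"
         "0 \<le> frac (3^(j+k) * x)" "frac (3^(j+k) * x) < 1" by (auto simp: frac_lt_1)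
    then show ?thesis unfolding D_def by linarith
  qed
  assume "frac (3^i * x) \<noteq> frac (3^j * x)"
  then have "D 0 \<noteq> 0" by (simp add: D_def)
  then have pos: "\<bar>D 0\<bar> > 0" by simp
  have "\<exists>k. 1 / \<bar>D 0\<bar> < (3::real)^k" by (rule real_arch_pow) simp
  then obtain k where k: "1 / \<bar>D 0\<bar> < (3::real)^k" by blast
  then have "1 < 3^k * \<bar>D 0\<bar>" using pos by (simp add: divide_less_eq)
  also have "\<dots> = \<bar>D k\<bar>" unfolding Dk[of k] by (simp add: abs_mult)
  finally show False using Db[of k] by simp
qed

lemma period_exists:
  fixes p :: int and q :: nat
  assumes "q > 0"
  shows "\<exists>k>0. \<exists>N. \<forall>i\<ge>N. ternary_digit (of_int p / real q) (i + k) = ternary_digit (of_int p / real q) i"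
proof -
  define x where "x = of_int p / real q"
  define g where "g = (\<lambda>i::nat. 3^i * p - int q * \<lfloor>3^i * x\<rfloor>)"
  have gf: "real_of_int (g i) = real q * frac (3^i * x)" for i
    using assms by (simp add: g_def x_def frac_def field_simps)
  have gB: "g i \<in> {0..<int q}" for i
  proof -
    have "0 \<le> frac (3^i * x)" "frac (3^i * x) < 1" by (auto simp: frac_lt_1)
    then have "0 \<le> real q * frac (3^i * x)" "real q * frac (3^i * x) < real q"
      using assms by auto
    then have "real_of_int 0 \<le> real_of_int (g i)" "real_of_int (g i) < real_of_int (int q)"
      using gf[of i] by simp_all
    then have "0 \<le> g i" "g i < int q" by (simp_all only: of_int_le_iff of_int_less_iff)
    then show ?thesis by simp
  qed
  have "\<not> inj_on g {0..q}"
  proof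
    assume "inj_on g {0..q}"
    then have "card {0..q} \<le> card {0..<int q}"
      by (rule card_inj_on_le) (use gB in auto)
    then show False by simp
  qed
  then obtain i j where ij: "i \<noteq> j" "g i = g j" by (auto simp: inj_on_def)
  have fe: "frac (3^i * x) = frac (3^j * x)" using gf[of i] gf[of j] ij assms by simp
  have main: "\<forall>m\<ge>a. ternary_digit x (m + (b - a)) = ternary_digit x m"
    if "a < b" "frac (3^a * x) = frac (3^b * x)" for a b
  proof (intro allI impI)
    fix m assume "a \<le> m"
    have "ternary_digit x (a + (m - a)) = ternary_digit x (b + (m - a))"
      by (rule digit_shift[OF that(2)])
    moreover have "a + (m - a) = m" "b + (m - a) = m + (b - a)" using \<open>a \<le> m\<close> that(1) by auto
    ultimately show "ternary_digit x (m + (b - a)) = ternary_digit x m" by simp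
  qed
  show ?thesis
  proof (cases "i < j")
    case True then show ?thesis using main[OF True fe] unfolding x_def
      by (intro exI[of _ "j - i"]) auto
  next
    case False then have "j < i" using ij by simp
    then show ?thesis using main[OF \<open>j < i\<close> fe[symmetric]] unfolding x_def
      by (intro exI[of _ "i - j"]) auto
  qed
qed

lemma period_dvd:
  fixes p :: int and q :: nat
  assumes "q > 0" "coprime p (int q)"
  defines "P \<equiv> ternary_period (of_int p / real q)"
  shows "P > 0 \<and> (\<exists>N. q dvd 3^N * (3^P - 1))"
proof -
  define x where "x = of_int p / real q"
  have ex: "\<exists>k. k > 0 \<and> (\<exists>N. \<forall>i\<ge>N. ternary_digit x (i + k) = ternary_digit x i)"
    using period_exists[OF assms(1), of p] unfolding x_def by blast
  have "P > 0 \<and> (\<exists>N. \<forall>i\<ge>N. ternary_digit x (i + P) = ternary_digit x i)"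
    unfolding P_def ternary_period_def x_def[symmetric] by (rule LeastI_ex[OF ex])
  then obtain N where P0: "P > 0" and per: "\<forall>i\<ge>N. ternary_digit x (i + P) = ternary_digit x i"
    by blast
  have "\<forall>k. ternary_digit x (N + k) = ternary_digit x ((N + P) + k)"
  proof
    fix k
    have e: "N+P+k = N+k+P" by simp
    show "ternary_digit x (N + k) = ternary_digit x ((N + P) + k)"
      unfolding e using per[rule_format, of "N+k"] by simp
  qed
  then have fe: "frac (3^N * x) = frac (3^(N+P) * x)" by (rule digits_eq_frac)
  define z where "z = \<lfloor>3^(N+P) * x\<rfloor> - \<lfloor>3^N * x\<rfloor>"
  have "3^(N+P) * x - 3^N * x = of_int z" using fe by (simp add: frac_def z_def)
  then have e1: "(3^N * (3^P - 1)) * x = of_int z" by (simp add: power_add algebra_simps)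
  have qx: "real q * x = of_int p" using assms(1) unfolding x_def by simp
  have "(3^N * (3^P - 1)) * of_int p = (3^N * (3^P - 1)) * (real q * x)" by (simp only: qx)
  also have "\<dots> = real q * ((3^N * (3^P - 1)) * x)" by (simp only: mult_ac)
  also have "\<dots> = real q * of_int z" by (simp only: e1)
  finally have "(3^N * (3^P - 1)) * of_int p = real q * of_int z" .
  then have "real_of_int ((3^N * (3^P - 1)) * p) = real_of_int (int q * z)" by simp
  then have "(3^N * (3^P - 1)) * p = int q * z" by (rule of_int_eq_iff[THEN iffD1])
  then have "int q dvd (3^N * (3^P - 1)) * p" by (metis dvd_triv_left)
  then have "int q dvd 3^N * (3^P - 1)"
    using assms(2) by (metis coprime_commute coprime_dvd_mult_left_iff)
  moreover have "(3::int)^N * (3^P - 1) = int (3^N * (3^P - 1))"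
  proof -
    have "1 \<le> (3::nat)^P" by simp
    then have "int (3^P - 1) = 3^P - 1" by (simp add: of_nat_diff)
    then show ?thesis by (simp only: of_nat_mult of_nat_power) simp
  qed
  ultimately have "q dvd 3^N * (3^P - 1)" by (metis int_dvd_int_iff)
  then show ?thesis using P0 by blast
qed

lemma decomp3: "(q::nat) > 0 \<Longrightarrow> \<exists>a d. q = 3^a * d \<and> \<not> 3 dvd d"
proof (induction q rule: less_induct)
  case (less q)
  show ?case
  proof (cases "3 dvd q")
    case True
    then obtain q' where q': "q = 3 * q'" by blast
    then have "q' < q" "q' > 0" using less.prems by auto
    then obtain a d where "q' = 3^a * d" "\<not> 3 dvd d" using less.IH by blast
    then show ?thesis using q' by (intro exI[of _ "Suc a"] exI[of _ d]) auto
  next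
    case False then show ?thesis by (intro exI[of _ 0] exI[of _ q]) auto
  qed
qed

lemma dvd_split3:
  fixes q :: nat assumes "q > 0" "q dvd 3^N * M"
  shows "\<exists>a d. q = 3^a * d \<and> d dvd M"
proof -
  obtain a d where ad: "q = 3^a * d" "\<not> 3 dvd d" using decomp3[OF assms(1)] by blast
  have "prime (3::nat)" by simp
  then have "coprime 3 d" using ad(2) by (rule prime_imp_coprime)
  then have "coprime d 3" by (simp add: coprime_commute)
  then have "coprime d (3^N)" by simp
  moreover have "d dvd 3^N * M" using assms(2) ad(1) by (metis dvd_mult_right)
  ultimately have "d dvd M" by (simp add: coprime_dvd_mult_right_iff)
  then show ?thesis using ad(1) by blast
qed



lemma cantor_bounds:
  assumes "\<forall>i. a i \<in> {0,2::nat}"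
  shows "(\<Sum>i<n. real (a i)/3^Suc i) \<le> (\<Sum>i. real (a i)/3^Suc i) \<and>
         (\<Sum>i. real (a i)/3^Suc i) \<le> (\<Sum>i<n. real (a i)/3^Suc i) + 1/3^n"
proof -
  define f where "f = (\<lambda>i. real (a i)/3^Suc i)"
  define g where "g = (\<lambda>i. (2/3) * (1/3::real)^i)"
  have f0: "0 \<le> f i" for i by (simp add: f_def)
  have fg: "f i \<le> g i" for i
  proof -
    have "real (a i) \<le> 2" using assms by (metis empty_iff insert_iff of_nat_0 order_refl
          of_nat_numeral zero_le_numeral)
    then have "f i \<le> 2/3^Suc i" unfolding f_def by (intro divide_right_mono) auto
    also have "2/3^Suc i = g i" by (simp add: g_def power_one_over)
    finally show ?thesis .
  qed
  have gs: "summable g" unfolding g_def by (intro summable_mult summable_geometric) simp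
  have fs: "summable f"
    by (rule summable_comparison_test[OF _ gs]) (use f0 fg in auto)
  have split: "suminf f = (\<Sum>i. f (i+n)) + (\<Sum>i<n. f i)"
    by (rule suminf_split_initial_segment[OF fs])
  have fsn: "summable (\<lambda>i. f (i+n))" using fs by (subst summable_iff_shift)
  have gsn: "summable (\<lambda>i. g (i+n))" using gs by (subst summable_iff_shift)
  have t0: "0 \<le> (\<Sum>i. f (i+n))" by (rule suminf_nonneg[OF fsn]) (simp add: f0)
  have t1: "(\<Sum>i. f (i+n)) \<le> (\<Sum>i. g (i+n))" by (rule suminf_le) (use fg fsn gsn in auto)
  have "(\<lambda>i. ((2/3) * (1/3)^n) * (1/3::real)^i) sums (((2/3) * (1/3)^n) * (1 / (1 - 1/3)))"
    by (intro sums_mult geometric_sums) simp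
  moreover have "(\<lambda>i. ((2/3) * (1/3)^n) * (1/3::real)^i) = (\<lambda>i. g (i+n))"
    by (simp add: g_def power_add mult_ac)
  moreover have "((2/3) * (1/3)^n) * (1 / (1 - 1/3)) = (1/3::real)^n" by simp
  ultimately have "(\<lambda>i. g (i+n)) sums ((1/3)^n)" by simp
  then have "(\<Sum>i. g (i+n)) = 1/3^n" by (simp add: sums_iff power_one_over)
  then show ?thesis using split t0 t1 unfolding f_def by linarith
qed

lemma cantor_unit: "x \<in> cantor_set \<Longrightarrow> 0 \<le> x \<and> x \<le> 1"
  unfolding cantor_set_def using cantor_bounds[where n=0] by auto

lemma card_fixed_q:
  fixes q :: nat assumes "0 < q" "q < 3^n"
  shows "finite {p::int. of_int p / real q \<in> cantor_set} \<and>
         card {p::int. of_int p / real q \<in> cantor_set} \<le> 2^n"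
proof -
  define A where "A = {p::int. of_int p / real q \<in> cantor_set}"
  have Asub: "A \<subseteq> {0..int q}"
  proof
    fix p assume "p \<in> A"
    then have "0 \<le> of_int p / real q" "of_int p / real q \<le> 1" using cantor_unit by (auto simp: A_def)
    then have "0 \<le> real_of_int p" "real_of_int p \<le> real q" using assms(1)
      by (auto simp: divide_le_eq zero_le_divide_iff)
    then show "p \<in> {0..int q}" by simp
  qed
  then have finA: "finite A" by (rule finite_subset) simp
  define dg where "dg = (\<lambda>p::int. SOME a::nat\<Rightarrow>nat. (\<forall>i. a i \<in> {0, 2}) \<and>
                    of_int p / real q = (\<Sum>i. real (a i) / 3 ^ Suc i))"
  have dgp: "(\<forall>i. dg p i \<in> {0, 2}) \<and> of_int p / real q = (\<Sum>i. real (dg p i) / 3 ^ Suc i)"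
    if "p \<in> A" for p
  proof -
    have "\<exists>a::nat\<Rightarrow>nat. (\<forall>i. a i \<in> {0, 2}) \<and> of_int p / real q = (\<Sum>i. real (a i) / 3 ^ Suc i)"
      using that by (auto simp: A_def cantor_set_def)
    then show ?thesis unfolding dg_def by (rule someI_ex)
  qed
  define F where "F = (\<lambda>p. map (dg p) [0..<n])"
  have "inj_on F A"
  proof (rule inj_onI)
    fix p1 p2 assume p1: "p1 \<in> A" and p2: "p2 \<in> A" and eq: "F p1 = F p2"
    have "\<forall>i<n. dg p1 i = dg p2 i"
    proof (intro allI impI)
      fix i assume "i < n"
      then show "dg p1 i = dg p2 i" using arg_cong[OF eq, of "\<lambda>xs. xs ! i"] by (simp add: F_def)
    qed
    then have s: "(\<Sum>i<n. real (dg p1 i)/3^Suc i) = (\<Sum>i<n. real (dg p2 i)/3^Suc i)"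
      by (intro sum.cong) auto
    have b1: "(\<Sum>i<n. real (dg p1 i)/3^Suc i) \<le> of_int p1 / real q \<and>
         of_int p1 / real q \<le> (\<Sum>i<n. real (dg p1 i)/3^Suc i) + 1/3^n"
      using cantor_bounds[of "dg p1" n] dgp[OF p1] by simp
    have b2: "(\<Sum>i<n. real (dg p2 i)/3^Suc i) \<le> of_int p2 / real q \<and>
         of_int p2 / real q \<le> (\<Sum>i<n. real (dg p2 i)/3^Suc i) + 1/3^n"
      using cantor_bounds[of "dg p2" n] dgp[OF p2] by simp
    have "\<bar>of_int p1 / real q - of_int p2 / real q\<bar> \<le> 1/3^n" using b1 b2 s by linarith
    then have "\<bar>real_of_int (p1 - p2)\<bar> / real q \<le> 1/3^n"
      by (simp add: diff_divide_distrib[symmetric])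
    then have "\<bar>real_of_int (p1 - p2)\<bar> \<le> real q / 3^n" using assms(1)
      by (simp add: divide_le_eq)
    also have "\<dots> < 1" using assms(2)
    proof -
      have "real q < 3^n" using assms(2) by (metis of_nat_less_iff of_nat_numeral of_nat_power)
      then show ?thesis by simp
    qed
    finally have "\<bar>p1 - p2\<bar> < 1" by linarith
    then show "p1 = p2" by simp
  qed
  moreover have "F ` A \<subseteq> {xs. set xs \<subseteq> {0,2} \<and> length xs = n}"
  proof (rule image_subsetI)
    fix p assume "p \<in> A"
    then have "\<forall>i. dg p i \<in> {0,2}" using dgp by blast
    then show "F p \<in> {xs. set xs \<subseteq> {0,2} \<and> length xs = n}" unfolding F_def by (auto, metis less_numeral_extra(3))
  qed
  moreover have "finite {xs. set xs \<subseteq> {0,2::nat} \<and> length xs = n}"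
    by (rule finite_lists_length_eq) simp
  ultimately have "card A \<le> card {xs. set xs \<subseteq> {0,2::nat} \<and> length xs = n}"
    by (rule card_inj_on_le)
  also have "\<dots> = 2^n" by (subst card_lists_length_eq) (auto simp: numeral_2_eq_2)
  finally show ?thesis using finA unfolding A_def by simp
qed



lemma count_bound:
  fixes K \<delta> Cd :: real and n :: nat
  assumes n1: "n \<ge> 1" and dpos: "\<delta> > 0" and Cpos: "Cd > 0"
    and Cd: "\<forall>m::nat. m > 0 \<longrightarrow> real (card {d. d dvd m}) \<le> Cd * real m powr \<delta>"
  defines "L \<equiv> nat \<lceil>\<bar>K\<bar> * real n * ln 3\<rceil>"
  shows "real (card (S_set K n)) \<le> real n * (real L * (Cd * (3^L) powr \<delta>)) * 2^n"
proof -
  define S where "S = S_set K n"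
  define Q where "Q = snd ` S"
  define D where "D = (\<Union>P\<in>{1..L}. {d::nat. d dvd 3^P - 1})"
  have Sq: "q > 0 \<and> q < 3^n" if "(p, q) \<in> S" for p q
  proof -
    have "(1::nat) \<le> 3^(n-1)" by simp
    moreover have "3^(n-1) \<le> q" "q < 3^n" using that by (auto simp: S_def S_set_def)
    ultimately show ?thesis by linarith
  qed
  have Qsub: "Q \<subseteq> (\<lambda>(a, d). 3^a * d) ` ({..<n} \<times> D)"
  proof
    fix q assume "q \<in> Q"
    then obtain x where x: "x \<in> S" "q = snd x" unfolding Q_def by (rule imageE)
    obtain p where pq: "(p, q) \<in> S" using x by (metis prod.collapse)
    have q0: "q > 0" and qn: "q < 3^n" using Sq[OF pq] by auto
    have cop: "coprime p (int q)" and per: "real (ternary_period (of_int p / real q)) \<le> K * ln (real q)"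
      using pq by (auto simp: S_def S_set_def)
    define P where "P = ternary_period (of_int p / real q)"
    obtain N where P0: "P > 0" and dv: "q dvd 3^N * (3^P - 1)"
      using period_dvd[OF q0 cop] unfolding P_def by blast
    obtain a d where ad: "q = 3^a * d" "d dvd 3^P - 1" using dvd_split3[OF q0 dv] by blast
    have "d > 0" using ad q0 by (cases "d = 0") auto
    then have "3^a \<le> q" using ad by simp
    then have "(3::nat)^a < 3^n" using qn by linarith
    then have an: "a < n" using power_less_imp_less_exp[of "3::nat" a n] by simp
    have lnq0: "0 \<le> ln (real q)" using q0 by simp
    have lnq: "ln (real q) \<le> real n * ln 3"
    proof -
      have "real q \<le> 3^n" using qn by (metis less_imp_le of_nat_le_iff of_nat_numeral of_nat_power)
      then have "ln (real q) \<le> ln (3^n)" using q0 by simp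
      then show ?thesis by (simp add: ln_realpow)
    qed
    have "real P \<le> K * ln (real q)" using per by (simp add: P_def)
    also have "\<dots> \<le> \<bar>K\<bar> * ln (real q)" using lnq0 by (intro mult_right_mono) auto
    also have "\<dots> \<le> \<bar>K\<bar> * (real n * ln 3)" using lnq by (intro mult_left_mono) auto
    also have "\<dots> \<le> real L" unfolding L_def by (simp add: mult.assoc)
    finally have "P \<le> L" by simp
    then have "d \<in> D" using ad P0 by (auto simp: D_def)
    then show "q \<in> (\<lambda>(a, d). 3^a * d) ` ({..<n} \<times> D)" using ad an by force
  qed
  have op: "(0::nat) < 3^P - 1" if "P \<ge> 1" for P
  proof -
    have "(1::nat) < 3^P" using one_less_power[of "3::nat" P] that by simp
    then show ?thesis by simp
  qed
  have finD: "finite D" unfolding D_def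
  proof (rule finite_UN_I)
    fix P assume "P \<in> {1..L}"
    then show "finite {d::nat. d dvd 3^P - 1}" using finite_divisors_nat[OF op[of P]] by simp
  qed simp
  have cardD: "real (card D) \<le> real L * (Cd * (3^L) powr \<delta>)"
  proof -
    have "card D \<le> (\<Sum>P\<in>{1..L}. card {d::nat. d dvd 3^P - 1})"
      unfolding D_def by (rule card_UN_le) simp
    then have "real (card D) \<le> (\<Sum>P\<in>{1..L}. real (card {d::nat. d dvd 3^P - 1}))"
      by (simp only: of_nat_le_iff flip: of_nat_sum)
    also have "\<dots> \<le> (\<Sum>P\<in>{1..L}. Cd * (3^L) powr \<delta>)"
    proof (rule sum_mono)
      fix P assume P: "P \<in> {1..L}"
      have pos: "(3::nat)^P - 1 > 0" using P op by simp
      have "real (3^P - 1 :: nat) \<le> 3^L"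
      proof -
        have "(3::nat)^P \<le> 3^L" using P by (intro power_increasing) auto
        then have "(3::nat)^P - 1 \<le> 3^L" by linarith
        then have "real ((3::nat)^P - 1) \<le> real ((3::nat)^L)" by (simp only: of_nat_le_iff)
        then show ?thesis by simp
      qed
      then have "real (3^P - 1 :: nat) powr \<delta> \<le> (3^L) powr \<delta>"
        using dpos by (intro powr_mono2) auto
      then show "real (card {d::nat. d dvd 3^P - 1}) \<le> Cd * (3^L) powr \<delta>"
      proof -
        have "real (card {d::nat. d dvd 3^P - 1}) \<le> Cd * real (3^P - 1 :: nat) powr \<delta>"
          using Cd pos by blast
        also have "\<dots> \<le> Cd * (3^L) powr \<delta>" using Cpos \<open>real (3^P - 1 :: nat) powr \<delta> \<le> (3^L) powr \<delta>\<close>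
          by (intro mult_left_mono) auto
        finally show ?thesis .
      qed
    qed
    also have "\<dots> = real L * (Cd * (3^L) powr \<delta>)" by simp
    finally show ?thesis .
  qed
  have cardQ: "card Q \<le> n * card D"
  proof -
    have "card Q \<le> card ((\<lambda>(a, d). 3^a * d) ` ({..<n} \<times> D))"
      by (rule card_mono[OF _ Qsub]) (intro finite_imageI finite_cartesian_product finD, simp)
    also have "\<dots> \<le> card ({..<n} \<times> D)" by (rule card_image_le) (intro finite_cartesian_product finD, simp)
    also have "\<dots> = n * card D" by (simp add: card_cartesian_product)
    finally show ?thesis .
  qed
  define G where "G = (\<lambda>q::nat. {p::int. of_int p / real q \<in> cantor_set})"
  have finQ: "finite Q"
    by (rule finite_subset[OF Qsub], intro finite_imageI finite_cartesian_product finD) simp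
  have Ssub: "S \<subseteq> (\<Union>q\<in>Q. (\<lambda>p. (p, q)) ` G q)"
  proof
    fix x assume "x \<in> S"
    then obtain p q where x: "x = (p, q)" and pq: "(p, q) \<in> S" by (cases x) auto
    have qQ: "q \<in> Q" using pq unfolding Q_def by (metis image_eqI snd_conv)
    have pG: "p \<in> G q" using pq by (auto simp: S_def S_set_def G_def)
    show "x \<in> (\<Union>q\<in>Q. (\<lambda>p. (p, q)) ` G q)" unfolding x
      by (rule UN_I[OF qQ]) (rule imageI[OF pG])
  qed
  have Gq: "finite (G q) \<and> card (G q) \<le> 2^n" if qQ: "q \<in> Q" for q
  proof -
    obtain x where x: "x \<in> S" "q = snd x" using qQ unfolding Q_def by (rule imageE)
    have pq: "(fst x, q) \<in> S" using x by simp
    have "q > 0 \<and> q < 3^n" by (rule Sq[OF pq])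
    then have "q > 0" "q < 3^n" by simp_all
    then show ?thesis unfolding G_def by (rule card_fixed_q)
  qed
  have finU: "finite (\<Union>q\<in>Q. (\<lambda>p. (p, q)) ` G q)"
  proof (rule finite_UN_I[OF finQ])
    fix q assume "q \<in> Q"
    then show "finite ((\<lambda>p. (p, q)) ` G q)" using Gq[of q] by simp
  qed
  have "card S \<le> card (\<Union>q\<in>Q. (\<lambda>p. (p, q)) ` G q)"
    by (rule card_mono[OF finU Ssub])
  also have "\<dots> \<le> (\<Sum>q\<in>Q. card ((\<lambda>p. (p, q)) ` G q))" by (rule card_UN_le[OF finQ])
  also have "\<dots> \<le> (\<Sum>q\<in>Q. 2^n)"
  proof (rule sum_mono)
    fix q assume q: "q \<in> Q"
    have "card ((\<lambda>p. (p, q)) ` G q) \<le> card (G q)" using card_image_le[of "G q" "\<lambda>p. (p, q)"] Gq[OF q] by simp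
    then show "card ((\<lambda>p. (p, q)) ` G q) \<le> 2^n" using Gq[OF q] by linarith
  qed
  also have "\<dots> = card Q * 2^n" by simp
  finally have "card S \<le> card Q * 2^n" .
  then have "real (card S) \<le> real (card Q) * 2^n" by (metis of_nat_le_iff of_nat_mult of_nat_numeral of_nat_power)
  also have "\<dots> \<le> (real n * real (card D)) * 2^n"
    using cardQ by (intro mult_right_mono) (metis of_nat_le_iff of_nat_mult, simp)
  also have "\<dots> \<le> real n * (real L * (Cd * (3^L) powr \<delta>)) * 2^n"
    using cardD by (intro mult_right_mono mult_left_mono) auto
  finally show ?thesis unfolding S_def .
qed



theorem theorem5p2:
  fixes K :: real and \<epsilon>1 :: real
  assumes "\<epsilon>1 > 0"
  shows "(\<lambda>n. real (card (S_set K n))) \<in> O(\<lambda>n. 2 powr (real n * (1 + \<epsilon>1)))"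
proof -
  define A where "A = \<bar>K\<bar> * ln 3"
  have A0: "A \<ge> 0" by (simp add: A_def)
  define \<delta> where "\<delta> = \<epsilon>1 * ln 2 / (2 * (A + 1) * ln 3)"
  have dpos: "\<delta> > 0" using assms A0 by (simp add: \<delta>_def)
  obtain Cd where Cpos: "Cd > 0" and Cd: "\<forall>m::nat. m > 0 \<longrightarrow> real (card {d. d dvd m}) \<le> Cd * real m powr \<delta>"
    using divisor_bound[OF dpos] by blast
  define c where "c = Cd * (A + 1) * 2 powr (\<epsilon>1 / 2)"
  define h where "h = (\<lambda>n::nat. real n * (real n + 1) * 2 powr (real n * (1 + \<epsilon>1 / 2)))"
  have h2: "2 powr (\<epsilon>1 * real n / 2) * 2^n = 2 powr (real n * (1 + \<epsilon>1 / 2))" for n :: nat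
  proof -
    have "(2::real)^n = 2 powr real n" by (simp add: powr_realpow)
    then show ?thesis by (simp add: powr_add[symmetric] algebra_simps)
  qed
  have bound: "real (card (S_set K n)) \<le> c * h n" if n1: "n \<ge> 1" for n :: nat
  proof -
    define L where "L = nat \<lceil>\<bar>K\<bar> * real n * ln 3\<rceil>"
    have cb: "real (card (S_set K n)) \<le> real n * (real L * (Cd * (3^L) powr \<delta>)) * 2^n"
      unfolding L_def by (rule count_bound[OF n1 dpos Cpos Cd])
    have y0: "0 \<le> \<bar>K\<bar> * real n * ln 3" by simp
    have L1: "real L \<le> A * real n + 1"
    proof -
      have "real L = of_int \<lceil>\<bar>K\<bar> * real n * ln 3\<rceil>" unfolding L_def using y0 by simp
      also have "\<dots> \<le> \<bar>K\<bar> * real n * ln 3 + 1" by linarith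
      finally show ?thesis by (simp add: A_def mult_ac)
    qed
    have L2: "real L \<le> (A + 1) * (real n + 1)" using L1 A0 by (simp add: algebra_simps)
    have P: "((3::real)^L) powr \<delta> \<le> 2 powr (\<epsilon>1 / 2) * 2 powr (\<epsilon>1 * real n / 2)"
    proof -
      have "((3::real)^L) powr \<delta> = 3 powr (real L * \<delta>)"
        by (simp add: powr_realpow[symmetric] powr_powr)
      also have "\<dots> \<le> 3 powr ((A * real n + 1) * \<delta>)"
        using L1 dpos by (intro powr_mono mult_right_mono) auto
      also have "\<dots> = exp ((A * real n + 1) * \<epsilon>1 * ln 2 / (2 * (A + 1)))"
        unfolding powr_def \<delta>_def by simp
      also have "\<dots> \<le> exp ((real n + 1) * \<epsilon>1 * ln 2 / 2)"
      proof -
        have "(A * real n + 1) \<le> (A + 1) * (real n + 1)" using A0 by (simp add: algebra_simps)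
        then have "(A * real n + 1) / (A + 1) \<le> real n + 1" using A0 by (simp add: divide_le_eq mult.commute)
        then have "(A * real n + 1) / (A + 1) * (\<epsilon>1 * ln 2 / 2) \<le> (real n + 1) * (\<epsilon>1 * ln 2 / 2)"
          using assms by (intro mult_right_mono) auto
        then show ?thesis by (simp add: field_simps)
      qed
      also have "\<dots> = 2 powr (\<epsilon>1 / 2) * 2 powr (\<epsilon>1 * real n / 2)"
        by (simp add: powr_def exp_add[symmetric] field_simps)
      finally show ?thesis .
    qed
    have "real n * (real L * (Cd * (3^L) powr \<delta>)) * 2^n
        \<le> real n * (((A + 1) * (real n + 1)) * (Cd * (2 powr (\<epsilon>1 / 2) * 2 powr (\<epsilon>1 * real n / 2)))) * 2^n"
      using L2 P Cpos A0 by (intro mult_right_mono mult_left_mono mult_mono) auto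
    also have "\<dots> = c * (real n * (real n + 1) * (2 powr (\<epsilon>1 * real n / 2) * 2^n))"
      by (simp add: c_def mult_ac)
    also have "\<dots> = c * h n" by (simp only: h2 h_def mult.assoc)
    finally show ?thesis using cb by linarith
  qed
  have "(\<lambda>n. real (card (S_set K n))) \<in> O(h)"
  proof (rule bigoI[of _ c])
    show "\<forall>\<^sub>F n in at_top. norm (real (card (S_set K n))) \<le> c * norm (h n)"
    proof (rule eventually_mono[OF eventually_ge_at_top[of 1]])
      fix n :: nat assume "n \<ge> 1"
      moreover have "h n \<ge> 0" by (simp add: h_def)
      ultimately show "norm (real (card (S_set K n))) \<le> c * norm (h n)" using bound by simp
    qed
  qed
  also have "h \<in> O(\<lambda>n. 2 powr (real n * (1 + \<epsilon>1)))"
    unfolding h_def using assms by real_asymp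
  finally show ?thesis .
qed

end
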